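(* Let $(c_k)_{k\ge0}$ be a real sequence with $c_0=1$ and $A:=\sum_{k=0}^\infty|c_k|<\infty$, such that $\sum_{k=q}^\infty|c_k|\le Ce^{-\lambda q}$ for every $q\ge1$, where $C,\lambda>0$ are constants. Let $(Y_n)_{n\ge1}$ be i.i.d. with $\mathbb{E}[Y_1^2]<\infty$, and assume there is $\delta>0$ with $\mathbb{P}(Y_1<-\delta)>0$ and $\mathbb{P}(Y_1>\delta)>0$. Let $X_n:=\sum_{k=1}^n c_{n-k}Y_k$ and $p_N(x):=\mathbb{P}(\sup_{n=1,\dots,N}X_n\le x)$. Then for every $x\in[0,\delta A)$ there is $c(x)>0$ such that $p_N(x)\precsim\exp(-c(x)\sqrt N)$ as $N\to\infty$. If moreover $\mathbb{E}[\exp(|Y_1|^\alpha)]<\infty$ for some $\alpha>0$, then for every $x\in[0,\delta A)$ there is $c(x)>0$ such that $p_N(x)\precsim\exp(-c(x)N/\log N)$ as $N\to\infty$.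
   Context: $f\precsim g$ means $\limsup_{N\to\infty} f(N)/g(N)<\infty$. *)

theory Defs
  imports "HOL-Probability.Probability" "HOL-Library.Landau_Symbols"
begin

definition ma_proc :: "(nat \<Rightarrow> real) \<Rightarrow> (nat \<Rightarrow> 'a \<Rightarrow> real) \<Rightarrow> nat \<Rightarrow> 'a \<Rightarrow> real" where
  "ma_proc c Y n \<omega> = (\<Sum>k=1..n. c (n - k) * Y k \<omega>)"

definition persist_prob :: "'a measure \<Rightarrow> (nat \<Rightarrow> 'a \<Rightarrow> real) \<Rightarrow> nat \<Rightarrow> real \<Rightarrow> real" where
  "persist_prob M X N x = measure M {\<omega> \<in> space M. \<forall>n\<in>{1..N}. X n \<omega> \<le> x}"

end

theory Submission
  imports Defs
begin

locale blk = fixes c :: "nat \<Rightarrow> real" and m :: nat and \<delta> \<epsilon> w :: real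
begin
definition Gset :: "nat \<Rightarrow> real set" where
  "Gset d = (if c d > 0 then {\<delta><..} else if c d < 0 then {..< -\<delta>} else UNIV)"
definition Rv :: "nat \<Rightarrow> (nat \<Rightarrow> real) \<Rightarrow> real" where
  "Rv i y = (\<Sum>k\<in>{1..(i-1)*m}. c (i*m - k) * y k)"
definition Gi :: "nat \<Rightarrow> (nat \<Rightarrow> real) \<Rightarrow> real" where
  "Gi i y = (\<Prod>k\<in>{(i-1)*m+1..i*m}. indicator (Gset (i*m-k)) (y k))"
definition Hi :: "nat \<Rightarrow> (nat \<Rightarrow> real) \<Rightarrow> bool" where
  "Hi i y \<longleftrightarrow> Rv i y > -\<epsilon>"
definition fac :: "nat \<Rightarrow> (nat \<Rightarrow> real) \<Rightarrow> real" where
  "fac i y = (1 - Gi i y * (if Hi i y then 1 else 0)) * (if Hi i y then w else 1)"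
definition Fp :: "nat \<Rightarrow> (nat \<Rightarrow> real) \<Rightarrow> real" where
  "Fp j y = (\<Prod>i\<in>{1..j}. fac i y)"
definition Xv :: "nat \<Rightarrow> (nat \<Rightarrow> real) \<Rightarrow> real" where
  "Xv n y = (\<Sum>k\<in>{1..n}. c (n - k) * y k)"

lemma Gi_cases: "Gi i y = (if \<forall>k\<in>{(i-1)*m+1..i*m}. y k \<in> Gset (i*m-k) then 1 else 0)"
  unfolding Gi_def by (auto simp: indicator_def)

lemma Xv_split:
  assumes "i \<ge> 1"
  shows "Xv (i*m) y = Rv i y + (\<Sum>k\<in>{(i-1)*m+1..i*m}. c (i*m - k) * y k)"
proof -
  have "{1..i*m} = {1..(i-1)*m} \<union> {(i-1)*m+1..i*m}"
    using assms by (auto simp: algebra_simps)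
  then show ?thesis unfolding Xv_def Rv_def
    by (simp add: sum.union_disjoint)
qed

lemma window_reindex:
  "(\<Sum>k\<in>{(i-1)*m+1..i*m}. f (i*m - k)) = (\<Sum>j<m. f j)" if "i \<ge> 1" for f :: "nat \<Rightarrow> real"
proof (rule sum.reindex_bij_witness[where i="\<lambda>j. i*m - j" and j="\<lambda>k. i*m - k"])
  fix a assume "a \<in> {(i-1)*m+1..i*m}" then show "i*m - (i*m - a) = a" by auto
next
  fix a assume "a \<in> {(i-1)*m+1..i*m}" then show "i*m - a \<in> {..<m}"
    using that by (cases i) (auto simp: algebra_simps)
next
  fix b assume "b \<in> {..<m}" then show "i*m - (i*m - b) = b" using that
    by (cases i) auto
next
  fix b assume "b \<in> {..<m}" then show "i*m - b \<in> {(i-1)*m+1..i*m}" using that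
    by (cases i) auto
qed auto

lemma window_big:
  assumes "i \<ge> 1" "Gi i y \<noteq> 0"
  shows "(\<Sum>k\<in>{(i-1)*m+1..i*m}. c (i*m - k) * y k) \<ge> \<delta> * (\<Sum>j<m. \<bar>c j\<bar>)"
proof -
  have all: "\<forall>k\<in>{(i-1)*m+1..i*m}. y k \<in> Gset (i*m-k)" using assms(2) Gi_cases by (auto split: if_splits)
  have "(\<Sum>k\<in>{(i-1)*m+1..i*m}. c (i*m - k) * y k) \<ge> (\<Sum>k\<in>{(i-1)*m+1..i*m}. \<delta> * \<bar>c (i*m - k)\<bar>)"
  proof (rule sum_mono)
    fix k assume k: "k \<in> {(i-1)*m+1..i*m}"
    have "y k \<in> Gset (i*m-k)" using all k by auto
    then show "\<delta> * \<bar>c (i*m - k)\<bar> \<le> c (i*m - k) * y k"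
    proof -
      assume yk: "y k \<in> Gset (i*m-k)"
      consider "c (i*m-k) > 0" | "c (i*m-k) < 0" | "c (i*m-k) = 0" by linarith
      then show ?thesis
      proof cases
        case 1 then have "y k > \<delta>" using yk by (auto simp: Gset_def)
        then show ?thesis using 1 by (simp add: mult_left_mono)
      next
        case 2 then have "y k < -\<delta>" using yk by (auto simp: Gset_def)
        then show ?thesis using 2 mult_left_mono_neg[of "y k" "-\<delta>" "c (i*m-k)"] by (simp add: mult.commute)
      qed simp
    qed
  qed
  also have "(\<Sum>k\<in>{(i-1)*m+1..i*m}. \<delta> * \<bar>c (i*m - k)\<bar>) = \<delta> * (\<Sum>j<m. \<bar>c j\<bar>)"
    using window_reindex[OF assms(1), of "\<lambda>j. \<delta> * \<bar>c j\<bar>"] by (simp add: sum_distrib_left)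
  finally show ?thesis .
qed

end

context blk begin

lemma bad_witness:
  fixes C lam :: real and y :: "nat \<Rightarrow> real" and i :: nat
  assumes m1: "m \<ge> 1" and ep: "\<epsilon> > 0" and Cp: "C > 0" and lp: "lam > 0"
    and cb: "\<And>d. d \<ge> 1 \<Longrightarrow> \<bar>c d\<bar> \<le> C * exp (- lam * real d)"
    and i1: "i \<ge> 1" and nH: "\<not> Hi i y"
  shows "\<exists>k\<in>{1..(i-1)*m}. \<epsilon> * (1 - exp (- lam/2)) / C * exp (lam * real m / 2)
             * exp (lam * real (i*m - k) / 2) \<le> \<bar>y k\<bar>"
proof (rule ccontr)
  define \<rho> where "\<rho> = exp (- lam/2)"
  define K where "K = \<epsilon> * (1 - \<rho>) / C * exp (lam * real m / 2)"
  define L where "L = (i-1)*m"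
  have \<rho>1: "\<rho> < 1" "\<rho> > 0" using lp by (auto simp: \<rho>_def)
  assume "\<not> ?thesis"
  then have sm: "\<And>k. k \<in> {1..L} \<Longrightarrow> \<bar>y k\<bar> < K * exp (lam * real (i*m - k) / 2)"
    by (auto simp: K_def \<rho>_def L_def not_le)
  have Rle: "Rv i y \<le> - \<epsilon>" using nH by (simp add: Hi_def)
  have trm: "\<bar>c (i*m - k) * y k\<bar> < \<epsilon> * (1 - \<rho>) * \<rho> ^ (L - k)" if k: "k \<in> {1..L}" for k
  proof -
    define d where "d = i*m - k"
    have dm: "d \<ge> m" "L - k = d - m" using k i1 by (auto simp: d_def L_def algebra_simps)
    have d1: "d \<ge> 1" using dm m1 by simp
    have "\<bar>c d * y k\<bar> = \<bar>c d\<bar> * \<bar>y k\<bar>" by (simp add: abs_mult)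
    also have "\<dots> \<le> C * exp (- lam * real d) * \<bar>y k\<bar>"
      by (rule mult_right_mono[OF cb[OF d1]]) simp
    also have "\<dots> < C * exp (- lam * real d) * (K * exp (lam * real d / 2))"
      using sm[OF k] Cp unfolding d_def by (intro mult_strict_left_mono) auto
    also have "\<dots> = \<epsilon> * (1 - \<rho>) * (exp (- lam * real d) * exp (lam * real m / 2) * exp (lam * real d / 2))"
      using Cp by (simp add: K_def field_simps)
    also have "exp (- lam * real d) * exp (lam * real m / 2) * exp (lam * real d / 2) = exp (- lam / 2 * real (d - m))"
      using dm by (simp add: exp_add[symmetric] of_nat_diff field_simps)
    also have "\<dots> = \<rho> ^ (L - k)" unfolding \<rho>_def dm(2) exp_of_nat2_mult[symmetric] by simp
    finally show ?thesis by (simp add: d_def)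
  qed
  have ne: "{1..L} \<noteq> {}"
  proof
    assume "{1..L} = {}"
    then have "Rv i y = 0" by (simp add: Rv_def L_def)
    then show False using Rle ep by simp
  qed
  have "\<bar>Rv i y\<bar> \<le> (\<Sum>k\<in>{1..L}. \<bar>c (i*m - k) * y k\<bar>)"
    unfolding Rv_def L_def by (rule sum_abs)
  also have "\<dots> < (\<Sum>k\<in>{1..L}. \<epsilon> * (1 - \<rho>) * \<rho> ^ (L - k))"
    by (rule sum_strict_mono[OF _ ne trm]) simp
  also have "(\<Sum>k\<in>{1..L}. \<rho> ^ (L - k)) = (\<Sum>t<L. \<rho> ^ t)"
    by (rule sum.reindex_bij_witness[where i="\<lambda>t. L - t" and j="\<lambda>k. L - k"]) auto
  then have "(\<Sum>k\<in>{1..L}. \<epsilon> * (1 - \<rho>) * \<rho> ^ (L - k)) = \<epsilon> * ((1 - \<rho>) * (\<Sum>t<L. \<rho> ^ t))"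
    by (simp add: sum_distrib_left[symmetric] mult.assoc)
  also have "\<dots> = \<epsilon> * (1 - \<rho> ^ L)" by (simp add: one_diff_power_eq)
  also have "\<dots> \<le> \<epsilon>" using \<rho>1 ep by (simp add: zero_le_power)
  finally show False using Rle by linarith
qed

end

definition gcnt :: "real \<Rightarrow> real \<Rightarrow> real \<Rightarrow> nat" where
  "gcnt K lam t = card {d::nat. K * exp (lam * real d / 2) \<le> \<bar>t\<bar>}"

lemma gset_finite:
  assumes "K > 0" "lam > 0"
  shows "finite {d::nat. K * exp (lam * real d / 2) \<le> \<bar>t\<bar>}"
proof -
  have "{d::nat. K * exp (lam * real d / 2) \<le> \<bar>t\<bar>} \<subseteq> {..nat \<lceil>2 * \<bar>t\<bar> / (K * lam)\<rceil>}"
  proof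
    fix d assume "d \<in> {d::nat. K * exp (lam * real d / 2) \<le> \<bar>t\<bar>}"
    then have h: "K * exp (lam * real d / 2) \<le> \<bar>t\<bar>" by simp
    have "1 + lam * real d / 2 \<le> exp (lam * real d / 2)" by (rule exp_ge_add_one_self)
    then have "K * (1 + lam * real d / 2) \<le> \<bar>t\<bar>" using h assms by (meson mult_left_mono less_imp_le order_trans)
    then have "K * lam * real d / 2 \<le> \<bar>t\<bar>" using assms by (simp add: algebra_simps)
    then have "real d \<le> 2 * \<bar>t\<bar> / (K * lam)" using assms by (simp add: field_simps)
    then have "real d \<le> real (nat \<lceil>2 * \<bar>t\<bar> / (K * lam)\<rceil>)" by linarith
    then show "d \<in> {..nat \<lceil>2 * \<bar>t\<bar> / (K * lam)\<rceil>}" by simp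
  qed
  then show ?thesis using finite_subset by blast
qed

lemma gcnt_exp:
  assumes K: "K > 0" and l: "lam > 0"
  shows "exp (lam / 2 * real (gcnt K lam t)) \<le> 1 + exp (lam/2) * t\<^sup>2 / K\<^sup>2"
proof (cases "{d::nat. K * exp (lam * real d / 2) \<le> \<bar>t\<bar>} = {}")
  case True
  then show ?thesis by (simp add: gcnt_def)
next
  case False
  define S where "S = {d::nat. K * exp (lam * real d / 2) \<le> \<bar>t\<bar>}"
  have fS: "finite S" using gset_finite[OF K l] by (simp add: S_def)
  define D where "D = Max S"
  have DS: "D \<in> S" unfolding D_def using False fS by (intro Max_in) (auto simp: S_def)
  have sub: "S \<subseteq> {..D}" using fS by (auto simp: D_def)
  have "card S \<le> card {..D}" by (rule card_mono) (use sub in auto)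
  then have cS: "card S \<le> D + 1" by simp
  have hD: "K * exp (lam * real D / 2) \<le> \<bar>t\<bar>" using DS by (simp add: S_def)
  have "K \<le> K * exp (lam * real D / 2)" using K l by simp
  then have Kt: "K \<le> \<bar>t\<bar>" using hD by linarith
  have "exp (lam / 2 * real (gcnt K lam t)) \<le> exp (lam / 2 * real (D + 1))"
    using cS l by (simp add: gcnt_def S_def[symmetric])
  also have "\<dots> = exp (lam/2) * exp (lam * real D / 2)"
    by (simp add: exp_add[symmetric] algebra_simps)
  also have "\<dots> \<le> exp (lam/2) * (\<bar>t\<bar> / K)"
    using hD K by (simp add: field_simps)
  also have "\<bar>t\<bar> / K \<le> t\<^sup>2 / K\<^sup>2"
  proof -
    have "1 \<le> \<bar>t\<bar> / K" using Kt K by simp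
    then have "(\<bar>t\<bar> / K) * 1 \<le> (\<bar>t\<bar> / K) * (\<bar>t\<bar> / K)" by (intro mult_left_mono) auto
    then have "\<bar>t\<bar> / K \<le> (\<bar>t\<bar> / K)^2" by (simp add: power2_eq_square)
    then show ?thesis by (simp add: power_divide)
  qed
  then have "exp (lam/2) * (\<bar>t\<bar> / K) \<le> exp (lam/2) * (t\<^sup>2 / K\<^sup>2)" by (intro mult_left_mono) auto
  finally show ?thesis by (simp add: mult.assoc)
qed

context blk begin

lemma bad_count:
  fixes C lam :: real and y :: "nat \<Rightarrow> real" and B N :: nat
  assumes m1: "m \<ge> 1" and ep: "\<epsilon> > 0" and Cp: "C > 0" and lp: "lam > 0"
    and cb: "\<And>d. d \<ge> 1 \<Longrightarrow> \<bar>c d\<bar> \<le> C * exp (- lam * real d)"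
    and BN: "B * m \<le> N"
  defines "K \<equiv> \<epsilon> * (1 - exp (- lam/2)) / C * exp (lam * real m / 2)"
  shows "card {i\<in>{1..B}. \<not> Hi i y} \<le> (\<Sum>k\<in>{1..N}. gcnt K lam (y k))"
proof -
  have Kp: "K > 0" using ep Cp lp by (simp add: K_def)
  define A where "A k = {i\<in>{1..B}. k < i*m \<and> K * exp (lam * real (i*m - k) / 2) \<le> \<bar>y k\<bar>}" for k
  have "{i\<in>{1..B}. \<not> Hi i y} \<subseteq> (\<Union>k\<in>{1..N}. A k)"
  proof
    fix i assume i: "i \<in> {i\<in>{1..B}. \<not> Hi i y}"
    then have i1: "i \<ge> 1" "i \<le> B" "\<not> Hi i y" by auto
    obtain k where k: "k \<in> {1..(i-1)*m}" and
      kk: "K * exp (lam * real (i*m - k) / 2) \<le> \<bar>y k\<bar>"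
      using bad_witness[OF m1 ep Cp lp cb i1(1) i1(3)] unfolding K_def by blast
    have "i * m \<le> B * m" using i1 by simp
    then have iN: "i * m \<le> N" using BN by linarith
    have h: "(i-1)*m < i*m" using i1 m1 by (simp add: diff_mult_distrib)
    have "k \<le> (i-1)*m" using k by simp
    then have ki: "k < i*m" using h by linarith
    then have "k \<in> {1..N}" using k iN by simp
    moreover have "i \<in> A k" using ki kk i1 by (simp add: A_def)
    ultimately show "i \<in> (\<Union>k\<in>{1..N}. A k)" by blast
  qed
  then have "card {i\<in>{1..B}. \<not> Hi i y} \<le> card (\<Union>k\<in>{1..N}. A k)"
    by (intro card_mono) (simp_all add: A_def)
  also have "\<dots> \<le> (\<Sum>k\<in>{1..N}. card (A k))" by (rule card_UN_le) simp
  also have "\<dots> \<le> (\<Sum>k\<in>{1..N}. gcnt K lam (y k))"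
  proof (rule sum_mono)
    fix k
    show "card (A k) \<le> gcnt K lam (y k)" unfolding gcnt_def
    proof (rule card_inj_on_le[where f="\<lambda>i. i*m - k"])
      show "inj_on (\<lambda>i. i * m - k) (A k)"
      proof (rule inj_onI)
        fix a b assume a: "a \<in> A k" and b: "b \<in> A k" and e: "a * m - k = b * m - k"
        have "k < a*m" "k < b*m" using a b by (simp_all add: A_def)
        then have "a * m = b * m" using e by linarith
        then show "a = b" using m1 by simp
      qed
      show "(\<lambda>i. i * m - k) ` A k \<subseteq> {d. K * exp (lam * real d / 2) \<le> \<bar>y k\<bar>}"
        by (auto simp: A_def)
      show "finite {d::nat. K * exp (lam * real d / 2) \<le> \<bar>y k\<bar>}" by (rule gset_finite[OF Kp lp])
    qed
  qed
  finally show ?thesis .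
qed

end

context blk begin

lemma Gi_01: "Gi i y = 0 \<or> Gi i y = 1" by (simp add: Gi_cases)

lemma fac_surv:
  assumes i1: "i \<ge> 1" and big: "\<delta> * (\<Sum>j<m. \<bar>c j\<bar>) \<ge> x + \<epsilon>"
    and small: "Xv (i*m) y \<le> x"
  shows "fac i y = (if Hi i y then w else 1)"
proof (cases "Hi i y \<and> Gi i y \<noteq> 0")
  case True
  have "Xv (i*m) y = Rv i y + (\<Sum>k\<in>{(i-1)*m+1..i*m}. c (i*m - k) * y k)" by (rule Xv_split[OF i1])
  also have "\<dots> > x" using window_big[OF i1, of y] True big by (simp add: Hi_def)
  finally show ?thesis using small by simp
next
  case False
  then show ?thesis using Gi_01[of i y] by (auto simp: fac_def)
qed

lemma Fp_nonneg: "Fp j y \<ge> 0" if "w \<ge> 1"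
  unfolding Fp_def fac_def
proof (intro prod_nonneg)
  fix i
  have "0 \<le> 1 - Gi i y * (if Hi i y then 1 else 0)" using Gi_01[of i y] by auto
  moreover have "0 \<le> (if Hi i y then w else 1)" using that by auto
  ultimately show "0 \<le> (1 - Gi i y * (if Hi i y then 1 else 0)) * (if Hi i y then w else 1)" by simp
qed

lemma pointwise:
  fixes C lam :: real and y :: "nat \<Rightarrow> real" and B N :: nat and x :: real
  assumes m1: "m \<ge> 1" and ep: "\<epsilon> > 0" and Cp: "C > 0" and lp: "lam > 0"
    and cb: "\<And>d. d \<ge> 1 \<Longrightarrow> \<bar>c d\<bar> \<le> C * exp (- lam * real d)"
    and BN: "B * m \<le> N" and w1: "w \<ge> 1"
    and big: "\<delta> * (\<Sum>j<m. \<bar>c j\<bar>) \<ge> x + \<epsilon>"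
    and surv: "\<forall>n\<in>{1..N}. Xv n y \<le> x"
  defines "K \<equiv> \<epsilon> * (1 - exp (- lam/2)) / C * exp (lam * real m / 2)"
  shows "1 \<le> w powr (- real B / 2) * Fp B y
             + exp (- lam / 2 * (real B / 2)) * (\<Prod>k\<in>{1..N}. 1 + exp (lam/2) * (y k)\<^sup>2 / K\<^sup>2)"
proof -
  have Kp: "K > 0" using ep Cp lp by (simp add: K_def)
  have facs: "fac i y = (if Hi i y then w else 1)" if "i \<in> {1..B}" for i
  proof (rule fac_surv)
    show "i \<ge> 1" using that by simp
    have "i * m \<le> N" using that BN by (meson atLeastAtMost_iff le_trans mult_le_mono1)
    moreover have "i * m \<ge> 1" using that m1 by simp
    ultimately show "Xv (i*m) y \<le> x" using surv by simp
  qed (rule big)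
  define a where "a = card {i\<in>{1..B}. Hi i y}"
  define b where "b = card {i\<in>{1..B}. \<not> Hi i y}"
  have ab: "a + b = B"
  proof -
    have "card {i\<in>{1..B}. Hi i y} + card {i\<in>{1..B}. \<not> Hi i y} = card {1..B}"
    proof (subst card_Un_disjoint[symmetric])
      have "{i\<in>{1..B}. Hi i y} \<union> {i\<in>{1..B}. \<not> Hi i y} = {1..B}" by auto
      then show "card ({i\<in>{1..B}. Hi i y} \<union> {i\<in>{1..B}. \<not> Hi i y}) = card {1..B}" by simp
    qed auto
    then show ?thesis by (simp add: a_def b_def)
  qed
  have FpB: "Fp B y = w ^ a"
  proof -
    have "Fp B y = (\<Prod>i\<in>{1..B}. (if Hi i y then w else 1))"
      unfolding Fp_def using facs by (intro prod.cong) auto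
    also have "\<dots> = (\<Prod>i\<in>{i\<in>{1..B}. Hi i y}. w)"
      by (subst prod.inter_filter[symmetric]) auto
    also have "\<dots> = w ^ a" by (simp add: a_def)
    finally show ?thesis .
  qed
  define P where "P = (\<Prod>k\<in>{1..N}. 1 + exp (lam/2) * (y k)\<^sup>2 / K\<^sup>2)"
  have P0: "P \<ge> 0" unfolding P_def by (intro prod_nonneg) (auto intro: add_nonneg_nonneg)
  have F0: "Fp B y \<ge> 0" by (rule Fp_nonneg[OF w1])
  show ?thesis
  proof (cases "real a \<ge> real B / 2")
    case True
    have "w powr (- real B / 2) * Fp B y = w powr (- real B / 2) * w powr (real a)"
      using w1 by (simp add: FpB powr_realpow)
    also have "\<dots> = w powr (real a - real B / 2)" by (simp add: powr_add[symmetric])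
    also have "\<dots> \<ge> 1" using True w1 ge_one_powr_ge_zero[of w "real a - real B / 2"] by simp
    finally have "1 \<le> w powr (- real B / 2) * Fp B y" .
    moreover have "0 \<le> exp (- lam / 2 * (real B / 2)) * P" using P0 by simp
    ultimately show ?thesis unfolding P_def[symmetric] by linarith
  next
    case False
    then have bB: "real b > real B / 2" using ab by linarith
    have cnt: "b \<le> (\<Sum>k\<in>{1..N}. gcnt K lam (y k))"
      unfolding b_def K_def by (rule bad_count[OF m1 ep Cp lp cb BN])
    have "exp (lam / 2 * (real B / 2)) \<le> exp (lam / 2 * real b)"
      using bB lp by simp
    also have "\<dots> \<le> exp (lam / 2 * real (\<Sum>k\<in>{1..N}. gcnt K lam (y k)))"
    proof -
      have "real b \<le> real (\<Sum>k\<in>{1..N}. gcnt K lam (y k))" using cnt by (simp only: of_nat_le_iff)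
      then show ?thesis using lp by (simp del: of_nat_sum)
    qed
    also have "\<dots> = (\<Prod>k\<in>{1..N}. exp (lam / 2 * real (gcnt K lam (y k))))"
      by (simp add: of_nat_sum sum_distrib_left exp_sum)
    also have "\<dots> \<le> P" unfolding P_def
      by (intro prod_mono conjI gcnt_exp[OF Kp lp]) simp
    finally have "exp (lam / 2 * (real B / 2)) \<le> P" .
    then have "1 \<le> exp (- lam / 2 * (real B / 2)) * P"
      by (simp add: exp_minus field_simps)
    moreover have "0 \<le> w powr (- real B / 2) * Fp B y" using F0 w1 by simp
    ultimately show ?thesis unfolding P_def[symmetric] by linarith
  qed
qed

end

lemma measurable_component_any[measurable]:
  "(\<lambda>v. v k) \<in> borel_measurable (PiM J (\<lambda>_. borel :: real measure))"
proof (cases "k \<in> J")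
  case True then show ?thesis by measurable
next
  case False
  have "(\<lambda>v. undefined) \<in> borel_measurable (PiM J (\<lambda>_. borel :: real measure))" by simp
  then show ?thesis
    by (rule measurable_cong[THEN iffD1, rotated]) (use False in \<open>auto simp: space_PiM PiE_def extensional_def\<close>)
qed

context blk begin

lemma Gset_borel[measurable]: "Gset d \<in> sets borel"
  by (simp add: Gset_def)

lemma Rv_meas[measurable]: "Rv i \<in> borel_measurable (PiM J (\<lambda>_. borel))"
  unfolding Rv_def by measurable

lemma Gi_meas[measurable]: "Gi i \<in> borel_measurable (PiM J (\<lambda>_. borel))"
  unfolding Gi_def by measurable

lemma Hi_meas[measurable]: "Measurable.pred (PiM J (\<lambda>_. borel)) (Hi i)"
  unfolding Hi_def by measurable

lemma fac_meas[measurable]: "fac i \<in> borel_measurable (PiM J (\<lambda>_. borel))"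
  unfolding fac_def by measurable

lemma Fp_meas[measurable]: "Fp i \<in> borel_measurable (PiM J (\<lambda>_. borel))"
  unfolding Fp_def by measurable

lemma Xv_meas[measurable]: "Xv i \<in> borel_measurable (PiM J (\<lambda>_. borel))"
  unfolding Xv_def by measurable

end

context blk begin

lemma Rv_local: "(\<And>k. k \<in> {1..(i-1)*m} \<Longrightarrow> y k = z k) \<Longrightarrow> Rv i y = Rv i z"
  unfolding Rv_def by (intro sum.cong) auto

lemma Gi_local: "(\<And>k. k \<in> {(i-1)*m+1..i*m} \<Longrightarrow> y k = z k) \<Longrightarrow> Gi i y = Gi i z"
  unfolding Gi_def by (intro prod.cong) auto

lemma fac_local:
  assumes "i \<ge> 1" "i*m \<le> L" "\<And>k. k \<in> {1..L} \<Longrightarrow> y k = z k"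
  shows "fac i y = fac i z"
proof -
  have "(i-1)*m \<le> i*m" by (simp add: diff_mult_distrib)
  then have "Rv i y = Rv i z"
  proof (intro Rv_local)
    fix k assume k: "k \<in> {1..(i-1)*m}" and h: "(i-1)*m \<le> i*m"
    then have "k \<le> L" using assms(2) h by (meson atLeastAtMost_iff le_trans)
    then show "y k = z k" using k assms(3) by simp
  qed
  moreover have "Gi i y = Gi i z" using assms by (intro Gi_local) auto
  ultimately show ?thesis by (simp add: fac_def Hi_def)
qed

lemma Fp_local:
  assumes "j*m \<le> L" "\<And>k. k \<in> {1..L} \<Longrightarrow> y k = z k"
  shows "Fp j y = Fp j z"
  unfolding Fp_def
proof (intro prod.cong refl)
  fix i assume i: "i \<in> {1..j}"
  then have "i*m \<le> j*m" by simp
  then have "i*m \<le> L" using assms(1) by linarith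
  then show "fac i y = fac i z" using assms i by (intro fac_local[where L=L]) auto
qed

lemma Fp_Suc: "Fp (Suc j) y = Fp j y * fac (Suc j) y"
  unfolding Fp_def by (simp add: atLeastAtMostSuc_conv mult.commute)

lemma fac_bounds: "w \<ge> 1 \<Longrightarrow> 0 \<le> fac i y \<and> fac i y \<le> w"
  using Gi_01[of i y] by (auto simp: fac_def)

lemma Fp_bound: "w \<ge> 1 \<Longrightarrow> Fp j y \<le> w ^ j"
proof (induction j)
  case 0 then show ?case by (simp add: Fp_def)
next
  case (Suc j)
  have "Fp (Suc j) y = Fp j y * fac (Suc j) y" by (rule Fp_Suc)
  also have "\<dots> \<le> w ^ j * w"
    using Suc fac_bounds[OF Suc.prems, of "Suc j" y] Fp_nonneg[OF Suc.prems, of j y]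
    by (intro mult_mono) auto
  finally show ?case by (simp add: mult.commute)
qed

end

locale blkp = blk c m \<delta> \<epsilon> w + prob_space M
  for c m \<delta> \<epsilon> w and M :: "'a measure" +
  fixes Y :: "nat \<Rightarrow> 'a \<Rightarrow> real" and p :: real
  assumes meas: "\<And>n. n \<ge> 1 \<Longrightarrow> Y n \<in> borel_measurable M"
    and indep: "indep_vars (\<lambda>_. borel) Y {1..}"
    and ident: "\<And>n. n \<ge> 1 \<Longrightarrow> distr M borel (Y n) = distr M borel (Y 1)"
    and m1: "m \<ge> 1" and p0: "0 < p" and p1: "p < 1"
    and wdef: "w = 1 / (1 - p ^ m)"
    and pG: "\<And>d. p \<le> (\<integral>\<omega>. indicator (Gset d) (Y 1 \<omega>) \<partial>M)"
begin

definition Yr :: "'a \<Rightarrow> nat \<Rightarrow> real" where "Yr \<omega> = restrict (\<lambda>k. Y k \<omega>) {1..}"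

lemma Yr_meas[measurable]: "Yr \<in> measurable M (PiM {1..} (\<lambda>_. borel))"
  unfolding Yr_def by (rule measurable_restrict) (use meas in auto)

lemma w1: "w \<ge> 1"
proof -
  have "0 < p ^ m" "p ^ m < 1" using p0 p1 m1 by (auto simp: power_less_one_iff)
  then show ?thesis by (simp add: wdef field_simps)
qed

lemma ident_int:
  fixes f :: "real \<Rightarrow> real"
  assumes n: "n \<ge> 1" and f: "f \<in> borel_measurable borel"
  shows "(\<integral>\<omega>. f (Y n \<omega>) \<partial>M) = (\<integral>\<omega>. f (Y 1 \<omega>) \<partial>M)"
proof -
  have "(\<integral>\<omega>. f (Y n \<omega>) \<partial>M) = (\<integral>t. f t \<partial>distr M borel (Y n))"
    using integral_distr[of "Y n" M borel f] meas[OF n] f by simp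
  also have "\<dots> = (\<integral>t. f t \<partial>distr M borel (Y 1))" using ident[OF n] by simp
  also have "\<dots> = (\<integral>\<omega>. f (Y 1 \<omega>) \<partial>M)"
    using integral_distr[of "Y 1" M borel f] meas[of 1] f by simp
  finally show ?thesis .
qed

lemma EG:
  assumes i1: "i \<ge> 1"
  shows "(\<integral>\<omega>. Gi i (Yr \<omega>) \<partial>M) \<ge> p ^ m"
proof -
  define W where "W = {(i-1)*m+1..i*m}"
  have W1: "W \<subseteq> {1..}" by (auto simp: W_def)
  have cW: "card W = m" using i1 by (cases i) (auto simp: W_def)
  have "(\<integral>\<omega>. Gi i (Yr \<omega>) \<partial>M) = (\<integral>\<omega>. (\<Prod>k\<in>W. indicator (Gset (i*m-k)) (Y k \<omega>)) \<partial>M)"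
    unfolding Gi_def W_def Yr_def by (intro Bochner_Integration.integral_cong prod.cong) auto
  also have "\<dots> = (\<Prod>k\<in>W. (\<integral>\<omega>. indicator (Gset (i*m-k)) (Y k \<omega>) \<partial>M))"
  proof (rule indep_vars_lebesgue_integral)
    show "finite W" by (simp add: W_def)
    have "indep_vars (\<lambda>_. borel) Y W" using indep W1 by (rule indep_vars_subset)
    then show "indep_vars (\<lambda>_. borel) (\<lambda>k \<omega>. indicator (Gset (i*m-k)) (Y k \<omega>) :: real) W"
      by (rule indep_vars_compose2) measurable
    fix k assume "k \<in> W"
    then have "Y k \<in> borel_measurable M" using W1 meas by auto
    then show "integrable M (\<lambda>\<omega>. indicator (Gset (i*m-k)) (Y k \<omega>) :: real)"
      by (intro integrable_const_bound[where B=1]) (auto simp: indicator_def)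
  qed
  also have "\<dots> \<ge> (\<Prod>k\<in>W. p)"
  proof (rule prod_mono)
    fix k assume "k \<in> W"
    then have k1: "k \<ge> 1" using W1 by auto
    have "(\<integral>\<omega>. indicator (Gset (i*m-k)) (Y k \<omega>) \<partial>M) = (\<integral>\<omega>. indicator (Gset (i*m-k)) (Y 1 \<omega>) \<partial>M :: real)"
      by (rule ident_int[OF k1]) measurable
    then show "0 \<le> p \<and> p \<le> (\<integral>\<omega>. indicator (Gset (i*m-k)) (Y k \<omega>) \<partial>M)"
      using pG p0 by simp
  qed
  finally show ?thesis using cW by simp
qed

end

context blkp begin

lemma bounded_int:
  fixes f :: "'a \<Rightarrow> real" and B :: real
  assumes "f \<in> borel_measurable M" "\<And>\<omega>. \<omega> \<in> space M \<Longrightarrow> \<bar>f \<omega>\<bar> \<le> B"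
  shows "integrable M f"
  by (rule integrable_const_bound[where B=B]) (use assms in auto)

lemma EFp_step:
  shows "(\<integral>\<omega>. Fp (Suc j) (Yr \<omega>) \<partial>M) \<le> (\<integral>\<omega>. Fp j (Yr \<omega>) \<partial>M)"
proof -
  define i where "i = Suc j"
  define A where "A = {1..j*m}"
  define W where "W = {j*m+1..i*m}"
  define \<Psi> where "\<Psi> \<omega> = Fp j (Yr \<omega>) * (if Hi i (Yr \<omega>) then w else 1)" for \<omega>
  define \<Phi> where "\<Phi> \<omega> = Fp j (Yr \<omega>) * (if Hi i (Yr \<omega>) then w else 0)" for \<omega>
  define G where "G \<omega> = Gi i (Yr \<omega>)" for \<omega>
  have wpos: "w \<ge> 1" by (rule w1)
  have [measurable]: "\<Psi> \<in> borel_measurable M" "\<Phi> \<in> borel_measurable M" "G \<in> borel_measurable M"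
    unfolding \<Psi>_def \<Phi>_def G_def by measurable
  have Fb: "\<bar>Fp j y\<bar> \<le> w ^ j" for y using Fp_bound[OF wpos] Fp_nonneg[OF wpos] by (simp add: abs_of_nonneg)
  have Gb: "\<bar>Gi i y\<bar> \<le> 1" for y using Gi_01[of i y] by auto
  have ww: "w^j * 1 \<le> w^j * w" by (rule mult_left_mono) (use wpos in auto)
  have Fb2: "\<bar>Fp j y * (if b then w else v)\<bar> \<le> w^j * w" if "v = 0 \<or> v = 1" for y b v
  proof (cases b)
    case True
    then show ?thesis using Fb[of y] wpos by (simp add: abs_mult mult_right_mono)
  next
    case False
    then show ?thesis using Fb[of y] ww that by (auto simp: abs_mult)
  qed
  have iP: "integrable M \<Psi>"
    by (rule bounded_int[where B="w^j * w"]) (use Fb2 in \<open>auto simp: \<Psi>_def\<close>)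
  have iPh: "integrable M \<Phi>"
    by (rule bounded_int[where B="w^j * w"]) (use Fb2 in \<open>auto simp: \<Phi>_def\<close>)
  have iG: "integrable M G" by (rule bounded_int[where B=1]) (use Gb in \<open>auto simp: G_def\<close>)
  have iGPh: "integrable M (\<lambda>\<omega>. G \<omega> * \<Phi> \<omega>)"
  proof (rule bounded_int[where B="1 * (w^j * w)"])
    fix \<omega>
    have "\<bar>G \<omega> * \<Phi> \<omega>\<bar> = \<bar>G \<omega>\<bar> * \<bar>\<Phi> \<omega>\<bar>" by (simp add: abs_mult)
    also have "\<dots> \<le> 1 * (w^j * w)"
      using Gb Fb2[of 0] by (intro mult_mono) (auto simp: G_def \<Phi>_def)
    finally show "\<bar>G \<omega> * \<Phi> \<omega>\<bar> \<le> 1 * (w^j * w)" .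
  qed simp
  have decomp: "Fp (Suc j) (Yr \<omega>) = \<Psi> \<omega> - G \<omega> * \<Phi> \<omega>" for \<omega>
    unfolding Fp_Suc \<Psi>_def \<Phi>_def G_def i_def fac_def by (auto simp: algebra_simps)
  have indepGP: "(\<integral>\<omega>. G \<omega> * \<Phi> \<omega> \<partial>M) = (\<integral>\<omega>. G \<omega> \<partial>M) * (\<integral>\<omega>. \<Phi> \<omega> \<partial>M)"
  proof -
    define XA where "XA \<omega> = restrict (\<lambda>k. Y k \<omega>) A" for \<omega>
    define XW where "XW \<omega> = restrict (\<lambda>k. Y k \<omega>) W" for \<omega>
    define \<phi> where "\<phi> v = Fp j v * (if Hi i v then w else 0)" for v
    have iv: "indep_var (PiM W (\<lambda>_. borel)) XW (PiM A (\<lambda>_. borel)) XA"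
      unfolding XA_def XW_def
      by (rule indep_var_restrict[OF indep]) (auto simp: A_def W_def i_def)
    have [measurable]: "\<phi> \<in> borel_measurable (PiM A (\<lambda>_. borel))" unfolding \<phi>_def by measurable
    have iv2: "indep_var borel (Gi i \<circ> XW) borel (\<phi> \<circ> XA)"
      by (rule indep_var_compose[OF iv]) measurable
    have eG: "(Gi i \<circ> XW) \<omega> = G \<omega>" for \<omega>
      unfolding G_def XW_def comp_def by (rule Gi_local) (auto simp: W_def i_def Yr_def)
    have eP: "(\<phi> \<circ> XA) \<omega> = \<Phi> \<omega>" for \<omega>
    proof -
      have "Fp j (XA \<omega>) = Fp j (Yr \<omega>)"
        by (rule Fp_local[where L="j*m"]) (auto simp: XA_def A_def Yr_def)
      moreover have "Rv i (XA \<omega>) = Rv i (Yr \<omega>)"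
        by (rule Rv_local) (auto simp: XA_def A_def Yr_def i_def)
      ultimately show ?thesis by (simp add: \<phi>_def \<Phi>_def Hi_def)
    qed
    have "Gi i \<circ> XW = G" "\<phi> \<circ> XA = \<Phi>" using eG eP by auto
    then show ?thesis using indep_var_lebesgue_integral[OF iv2] iG iPh by simp
  qed
  have EPh0: "(\<integral>\<omega>. \<Phi> \<omega> \<partial>M) \<ge> 0"
    by (rule integral_nonneg_AE) (use Fp_nonneg[OF wpos] wpos in \<open>auto simp: \<Phi>_def\<close>)
  have EG: "(\<integral>\<omega>. G \<omega> \<partial>M) \<ge> p ^ m" unfolding G_def i_def by (rule EG) simp
  have pm: "0 < p ^ m" "p ^ m < 1" using p0 p1 m1 by (auto simp: power_less_one_iff)
  have key: "\<Psi> \<omega> - p ^ m * \<Phi> \<omega> = Fp j (Yr \<omega>)" for \<omega>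
  proof -
    have h: "w - p ^ m * w = 1" using pm by (simp add: wdef field_simps)
    have "Fp j (Yr \<omega>) * w - p ^ m * (Fp j (Yr \<omega>) * w) = Fp j (Yr \<omega>) * (w - p ^ m * w)"
      by (simp add: algebra_simps)
    then show ?thesis using h by (auto simp: \<Psi>_def \<Phi>_def)
  qed
  have "(\<integral>\<omega>. Fp (Suc j) (Yr \<omega>) \<partial>M) = (\<integral>\<omega>. \<Psi> \<omega> \<partial>M) - (\<integral>\<omega>. G \<omega> * \<Phi> \<omega> \<partial>M)"
    unfolding decomp by (rule Bochner_Integration.integral_diff[OF iP iGPh])
  also have "\<dots> = (\<integral>\<omega>. \<Psi> \<omega> \<partial>M) - (\<integral>\<omega>. G \<omega> \<partial>M) * (\<integral>\<omega>. \<Phi> \<omega> \<partial>M)" by (simp add: indepGP)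
  also have "\<dots> \<le> (\<integral>\<omega>. \<Psi> \<omega> \<partial>M) - p ^ m * (\<integral>\<omega>. \<Phi> \<omega> \<partial>M)"
    using EG EPh0 by (simp add: mult_right_mono)
  also have "\<dots> = (\<integral>\<omega>. \<Psi> \<omega> - p ^ m * \<Phi> \<omega> \<partial>M)"
    using iP iPh by simp
  also have "\<dots> = (\<integral>\<omega>. Fp j (Yr \<omega>) \<partial>M)" by (simp add: key)
  finally show ?thesis .
qed

lemma EFp: "(\<integral>\<omega>. Fp j (Yr \<omega>) \<partial>M) \<le> 1"
proof (induction j)
  case 0 then show ?case by (simp add: Fp_def prob_space)
next
  case (Suc j) then show ?case using EFp_step[of j] by linarith
qed

end

context blkp begin

lemma Eprod_h:
  fixes a :: real
  assumes a: "a \<ge> 0" and sq: "integrable M (\<lambda>\<omega>. (Y 1 \<omega>)\<^sup>2)"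
  shows "(\<integral>\<omega>. (\<Prod>k\<in>{1..N}. 1 + a * (Y k \<omega>)\<^sup>2) \<partial>M) = (1 + a * (\<integral>\<omega>. (Y 1 \<omega>)\<^sup>2 \<partial>M)) ^ N"
    and "integrable M (\<lambda>\<omega>. (\<Prod>k\<in>{1..N}. 1 + a * (Y k \<omega>)\<^sup>2))"
proof -
  have iv: "indep_vars (\<lambda>_. borel) (\<lambda>k \<omega>. 1 + a * (Y k \<omega>)\<^sup>2) {1..N}"
  proof -
    have "indep_vars (\<lambda>_. borel) Y {1..N}" using indep by (rule indep_vars_subset) auto
    then show ?thesis by (rule indep_vars_compose2[where Y="\<lambda>_ t. 1 + a * t\<^sup>2"]) measurable
  qed
  have E1: "(\<integral>\<omega>. 1 + a * (Y k \<omega>)\<^sup>2 \<partial>M) = 1 + a * (\<integral>\<omega>. (Y 1 \<omega>)\<^sup>2 \<partial>M)" and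
       I1: "integrable M (\<lambda>\<omega>. 1 + a * (Y k \<omega>)\<^sup>2)" if k: "k \<in> {1..N}" for k
  proof -
    have k1: "k \<ge> 1" using k by simp
    have "(\<integral>\<omega>. (Y k \<omega>)\<^sup>2 \<partial>M) = (\<integral>\<omega>. (Y 1 \<omega>)\<^sup>2 \<partial>M)"
      by (rule ident_int[OF k1, where f="\<lambda>t. t\<^sup>2"]) measurable
    moreover have iK: "integrable M (\<lambda>\<omega>. (Y k \<omega>)\<^sup>2)"
    proof -
      have "integrable (distr M borel (Y 1)) (\<lambda>t. t\<^sup>2)"
        using sq meas[of 1] by (subst integrable_distr_eq) auto
      then have "integrable (distr M borel (Y k)) (\<lambda>t. t\<^sup>2)" using ident[OF k1] by simp
      then show ?thesis using meas[OF k1] by (subst (asm) integrable_distr_eq) auto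
    qed
    ultimately show "(\<integral>\<omega>. 1 + a * (Y k \<omega>)\<^sup>2 \<partial>M) = 1 + a * (\<integral>\<omega>. (Y 1 \<omega>)\<^sup>2 \<partial>M)"
      by (simp add: prob_space)
    show "integrable M (\<lambda>\<omega>. 1 + a * (Y k \<omega>)\<^sup>2)" using iK by simp
  qed
  show "(\<integral>\<omega>. (\<Prod>k\<in>{1..N}. 1 + a * (Y k \<omega>)\<^sup>2) \<partial>M) = (1 + a * (\<integral>\<omega>. (Y 1 \<omega>)\<^sup>2 \<partial>M)) ^ N"
    using indep_vars_lebesgue_integral[OF _ iv I1] E1 by simp
  show "integrable M (\<lambda>\<omega>. (\<Prod>k\<in>{1..N}. 1 + a * (Y k \<omega>)\<^sup>2))"
    using indep_vars_integrable[OF _ iv I1] by simp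
qed

lemma ma_Xv: "ma_proc c Y n \<omega> = Xv n (Yr \<omega>)"
  unfolding ma_proc_def Xv_def Yr_def by (intro sum.cong) auto

lemma final_bound:
  fixes C lam x :: real and N :: nat
  assumes ep: "\<epsilon> > 0" and Cp: "C > 0" and lp: "lam > 0"
    and cb: "\<And>d. d \<ge> 1 \<Longrightarrow> \<bar>c d\<bar> \<le> C * exp (- lam * real d)"
    and big: "\<delta> * (\<Sum>j<m. \<bar>c j\<bar>) \<ge> x + \<epsilon>"
    and sq: "integrable M (\<lambda>\<omega>. (Y 1 \<omega>)\<^sup>2)"
  defines "K \<equiv> \<epsilon> * (1 - exp (- lam/2)) / C * exp (lam * real m / 2)"
  shows "persist_prob M (ma_proc c Y) N x \<le> w powr (- real (N div m) / 2)
          + exp (- lam / 2 * (real (N div m) / 2)) * (1 + exp (lam/2) / K\<^sup>2 * (\<integral>\<omega>. (Y 1 \<omega>)\<^sup>2 \<partial>M)) ^ N"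
proof -
  define B where "B = N div m"
  define a where "a = exp (lam/2) / K\<^sup>2"
  have a0: "a \<ge> 0" by (simp add: a_def)
  have BN: "B * m \<le> N" by (simp add: B_def)
  define S where "S = {\<omega>\<in>space M. \<forall>n\<in>{1..N}. Xv n (Yr \<omega>) \<le> x}"
  have [measurable]: "S \<in> sets M" unfolding S_def by measurable
  define R where "R \<omega> = w powr (- real B / 2) * Fp B (Yr \<omega>)
             + exp (- lam / 2 * (real B / 2)) * (\<Prod>k\<in>{1..N}. 1 + a * (Y k \<omega>)\<^sup>2)" for \<omega>
  have pp: "persist_prob M (ma_proc c Y) N x = measure M S"
    unfolding persist_prob_def S_def ma_Xv ..
  also have "\<dots> = (\<integral>\<omega>. indicator S \<omega> \<partial>M)" by simp
  also have "\<dots> \<le> (\<integral>\<omega>. R \<omega> \<partial>M)"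
  proof (rule integral_mono)
    show "integrable M (\<lambda>\<omega>. indicator S \<omega> :: real)"
      by (rule integrable_real_indicator) (auto simp: less_top[symmetric])
    have iF: "integrable M (\<lambda>\<omega>. Fp B (Yr \<omega>))"
      by (rule bounded_int[where B="w^B"]) (use Fp_bound[OF w1] Fp_nonneg[OF w1] in auto)
    show "integrable M R" unfolding R_def
      using iF Eprod_h(2)[OF a0 sq] by simp
    fix \<omega> assume \<omega>: "\<omega> \<in> space M"
    have R0: "R \<omega> \<ge> 0" unfolding R_def using Fp_nonneg[OF w1] a0
      by (intro add_nonneg_nonneg mult_nonneg_nonneg prod_nonneg) auto
    show "indicator S \<omega> \<le> R \<omega>"
    proof (cases "\<omega> \<in> S")
      case True
      then have surv: "\<forall>n\<in>{1..N}. Xv n (Yr \<omega>) \<le> x" by (simp add: S_def)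
      have "1 \<le> w powr (- real B / 2) * Fp B (Yr \<omega>)
             + exp (- lam / 2 * (real B / 2)) * (\<Prod>k\<in>{1..N}. 1 + exp (lam/2) * (Yr \<omega> k)\<^sup>2 / K\<^sup>2)"
        unfolding K_def by (rule pointwise[OF m1 ep Cp lp cb BN w1 big surv])
      also have "(\<Prod>k\<in>{1..N}. 1 + exp (lam/2) * (Yr \<omega> k)\<^sup>2 / K\<^sup>2) = (\<Prod>k\<in>{1..N}. 1 + a * (Y k \<omega>)\<^sup>2)"
        by (intro prod.cong) (auto simp: Yr_def a_def)
      finally show ?thesis using True by (simp add: R_def)
    qed (use R0 in simp)
  qed
  also have "\<dots> = w powr (- real B / 2) * (\<integral>\<omega>. Fp B (Yr \<omega>) \<partial>M)
       + exp (- lam / 2 * (real B / 2)) * (1 + a * (\<integral>\<omega>. (Y 1 \<omega>)\<^sup>2 \<partial>M)) ^ N"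
  proof -
    have iF: "integrable M (\<lambda>\<omega>. Fp B (Yr \<omega>))"
      by (rule bounded_int[where B="w^B"]) (use Fp_bound[OF w1] Fp_nonneg[OF w1] in auto)
    then show ?thesis unfolding R_def using Eprod_h[OF a0 sq] by simp
  qed
  also have "\<dots> \<le> w powr (- real B / 2) * 1
       + exp (- lam / 2 * (real B / 2)) * (1 + a * (\<integral>\<omega>. (Y 1 \<omega>)\<^sup>2 \<partial>M)) ^ N"
    using EFp[of B] by (intro add_right_mono mult_left_mono) auto
  finally show ?thesis by (simp add: B_def a_def)
qed

end

lemma aux_mono: "(X::real) \<le> Bn \<Longrightarrow> q \<ge> 0 \<Longrightarrow> - Bn / 2 * q \<le> - X / 2 * q"
proof -
  assume "X \<le> Bn" "q \<ge> 0"
  then have "X * q \<le> Bn * q" by (rule mult_right_mono)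
  then show ?thesis by simp
qed
lemma aux_mono2: "(X::real) \<le> Bn \<Longrightarrow> l \<ge> 0 \<Longrightarrow> - l / 4 * Bn \<le> - l / 4 * X"
proof -
  assume "X \<le> Bn" "l \<ge> 0"
  then have "l * X \<le> l * Bn" by (rule mult_left_mono)
  then show ?thesis by simp
qed

lemma div_lower: "real (N div m) \<ge> real N / real m - 1" if "m \<ge> 1" for N m :: nat
proof -
  have "N = N div m * m + N mod m" by simp
  moreover have "N mod m < m" using that by simp
  ultimately have "real N \<le> (real (N div m) + 1) * real m"
    by (metis add_le_mono le_refl less_imp_le_nat mult.commute mult_Suc_right of_nat_le_iff
        of_nat_mult of_nat_Suc add.commute) 
  then show ?thesis using that by (simp add: field_simps)
qed

lemma arith_final:
  fixes q lam a s2 :: real and m :: nat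
  assumes q0: "0 < q" and q1: "q < 1" and m1: "m \<ge> 1" and lp: "lam > 0"
    and a0: "a \<ge> 0" and s0: "s2 \<ge> 0" and as: "a * s2 \<le> lam / (8 * real m)"
  defines "c1 \<equiv> min (q / (2 * real m)) (lam / (8 * real m))"
  shows "(1 / (1 - q)) powr (- real (N div m) / 2)
          + exp (- lam / 2 * (real (N div m) / 2)) * (1 + a * s2) ^ N
         \<le> (exp (q/2) + exp (lam/4)) * exp (- c1 * real N)"
proof -
  define Bn where "Bn = real (N div m)"
  have Bn: "Bn \<ge> real N / real m - 1" unfolding Bn_def by (rule div_lower[OF m1])
  have mp: "real m > 0" using m1 by simp
  have c1a: "c1 \<le> q / (2 * real m)" and c1b: "c1 \<le> lam / (8 * real m)" by (simp_all add: c1_def)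
  have lnw: "ln (1 / (1 - q)) \<ge> q"
    using ln_one_minus_pos_upper_bound[of q] q0 q1 by (simp add: ln_div)
  have t1: "(1 / (1 - q)) powr (- Bn / 2) \<le> exp (q/2) * exp (- c1 * real N)"
  proof -
    have "(1 / (1 - q)) powr (- Bn / 2) = exp (- Bn / 2 * ln (1 / (1 - q)))"
      using q1 by (simp add: powr_def mult.commute)
    also have "\<dots> \<le> exp (- Bn / 2 * q)"
    proof -
      have "Bn \<ge> 0" by (simp add: Bn_def)
      then show ?thesis using lnw by (simp add: mult_left_mono)
    qed
    also have "\<dots> \<le> exp (q/2 - q / (2 * real m) * real N)"
    proof -
      have "- Bn / 2 * q \<le> - (real N / real m - 1) / 2 * q" using Bn q0 by (intro aux_mono) auto
      also have "\<dots> = q/2 - q / (2 * real m) * real N" using mp by (simp add: field_simps)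
      finally show ?thesis by simp
    qed
    also have "\<dots> \<le> exp (q/2 - c1 * real N)"
    proof -
      have "c1 * real N \<le> q / (2 * real m) * real N" by (rule mult_right_mono[OF c1a]) simp
      then show ?thesis by simp
    qed
    also have "\<dots> = exp (q/2) * exp (- c1 * real N)" by (simp add: exp_add[symmetric])
    finally show ?thesis .
  qed
  have t2: "exp (- lam / 2 * (Bn / 2)) * (1 + a * s2) ^ N \<le> exp (lam/4) * exp (- c1 * real N)"
  proof -
    have "(1 + a * s2) ^ N \<le> exp (a * s2) ^ N"
      using a0 s0 by (intro power_mono) (auto simp: add.commute exp_ge_add_one_self)
    also have "\<dots> = exp (a * s2 * real N)" by (simp add: exp_of_nat2_mult)
    also have "\<dots> \<le> exp (lam / (8 * real m) * real N)"
    proof -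
      have "a * s2 * real N \<le> lam / (8 * real m) * real N" by (rule mult_right_mono[OF as]) simp
      then show ?thesis by simp
    qed
    finally have h1: "(1 + a * s2) ^ N \<le> exp (lam / (8 * real m) * real N)" .
    have "exp (- lam / 2 * (Bn / 2)) * (1 + a * s2) ^ N
          \<le> exp (- lam / 2 * (Bn / 2)) * exp (lam / (8 * real m) * real N)"
      using h1 by simp
    also have "\<dots> = exp (- lam / 4 * Bn + lam / (8 * real m) * real N)" by (simp add: exp_add[symmetric])
    also have "\<dots> \<le> exp (lam / 4 - lam / (8 * real m) * real N)"
    proof -
      have "- lam / 4 * Bn \<le> - lam / 4 * (real N / real m - 1)" using Bn lp by (intro aux_mono2) auto
      also have "\<dots> = lam/4 - 2 * (lam / (8 * real m) * real N)" using mp by (simp add: field_simps)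
      finally show ?thesis by simp
    qed
    also have "\<dots> \<le> exp (lam / 4 - c1 * real N)"
    proof -
      have "c1 * real N \<le> lam / (8 * real m) * real N" by (rule mult_right_mono[OF c1b]) simp
      then show ?thesis by simp
    qed
    also have "\<dots> = exp (lam/4) * exp (- c1 * real N)" by (simp add: exp_add[symmetric])
    finally show ?thesis .
  qed
  show ?thesis using t1 t2 by (simp add: Bn_def distrib_right)
qed

lemma exp_sq_bound: "t \<ge> 0 \<Longrightarrow> t\<^sup>2 / 4 \<le> exp (t::real)"
proof -
  assume t: "t \<ge> 0"
  have "t / 2 \<le> exp (t/2)" using exp_ge_add_one_self[of "t/2"] by linarith
  then have "(t/2)\<^sup>2 \<le> (exp (t/2))\<^sup>2" using t by (intro power_mono) auto
  also have "(exp (t/2))\<^sup>2 = exp t" by (simp add: power2_eq_square exp_add[symmetric])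
  finally show ?thesis by (simp add: power_divide)
qed

theorem main_exp:
  fixes M :: "'a measure" and Y :: "nat \<Rightarrow> 'a \<Rightarrow> real"
    and c :: "nat \<Rightarrow> real" and C lam \<delta> x :: real
  assumes P: "prob_space M"
    and meas: "\<And>n. n \<ge> 1 \<Longrightarrow> Y n \<in> borel_measurable M"
    and indep: "prob_space.indep_vars M (\<lambda>_. borel) Y {1..}"
    and ident: "\<And>n. n \<ge> 1 \<Longrightarrow> distr M borel (Y n) = distr M borel (Y 1)"
    and csum: "summable (\<lambda>k. \<bar>c k\<bar>)"
    and Cpos: "C > 0" and lpos: "lam > 0"
    and tail: "\<And>q. q \<ge> 1 \<Longrightarrow> (\<Sum>k. \<bar>c (k + q)\<bar>) \<le> C * exp (- lam * real q)"
    and sq: "integrable M (\<lambda>\<omega>. (Y 1 \<omega>)\<^sup>2)"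
    and dpos: "\<delta> > 0"
    and neg: "measure M {\<omega> \<in> space M. Y 1 \<omega> < - \<delta>} > 0"
    and posi: "measure M {\<omega> \<in> space M. Y 1 \<omega> > \<delta>} > 0"
    and x0: "0 \<le> x" and xA: "x < \<delta> * (\<Sum>k. \<bar>c k\<bar>)"
  shows "\<exists>c1>0. \<exists>K0. \<forall>N. persist_prob M (ma_proc c Y) N x \<le> K0 * exp (- c1 * real N)"
proof -
  interpret prob_space M by (rule P)
  have cb: "\<bar>c d\<bar> \<le> C * exp (- lam * real d)" if d: "d \<ge> 1" for d
  proof -
    have s: "summable (\<lambda>k. \<bar>c (k + d)\<bar>)" using summable_ignore_initial_segment[OF csum, of d] by simp
    have "(\<Sum>k\<in>{0}. \<bar>c (k + d)\<bar>) \<le> (\<Sum>k. \<bar>c (k + d)\<bar>)" by (rule sum_le_suminf[OF s]) auto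
    then show ?thesis using tail[OF d] by simp
  qed
  define A where "A = (\<Sum>k. \<bar>c k\<bar>)"
  have "(\<lambda>n. \<delta> * (\<Sum>i<n. \<bar>c i\<bar>)) \<longlonglongrightarrow> \<delta> * A"
    unfolding A_def by (intro tendsto_mult tendsto_const summable_LIMSEQ[OF csum])
  then have "eventually (\<lambda>n. \<delta> * (\<Sum>i<n. \<bar>c i\<bar>) > x) sequentially"
    using xA by (intro order_tendstoD(1)) (auto simp: A_def)
  then obtain m0 where m0: "\<delta> * (\<Sum>i<m0. \<bar>c i\<bar>) > x" by (auto simp: eventually_sequentially)
  define \<epsilon> where "\<epsilon> = (\<delta> * (\<Sum>i<m0. \<bar>c i\<bar>) - x) / 2"
  have ep: "\<epsilon> > 0" using m0 by (simp add: \<epsilon>_def)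
  have bigm: "\<delta> * (\<Sum>j<m. \<bar>c j\<bar>) \<ge> x + \<epsilon>" if "m \<ge> m0" for m
  proof -
    have "(\<Sum>i<m0. \<bar>c i\<bar>) \<le> (\<Sum>j<m. \<bar>c j\<bar>)" using that by (intro sum_mono2) auto
    then have "\<delta> * (\<Sum>i<m0. \<bar>c i\<bar>) \<le> \<delta> * (\<Sum>j<m. \<bar>c j\<bar>)" using dpos by simp
    then show ?thesis using m0 unfolding \<epsilon>_def by argo
  qed
  define P1 where "P1 = measure M {\<omega> \<in> space M. Y 1 \<omega> > \<delta>}"
  define P2 where "P2 = measure M {\<omega> \<in> space M. Y 1 \<omega> < - \<delta>}"
  define p where "p = min (min P1 P2) (1/2)"
  have p0: "p > 0" and p1: "p < 1" using neg posi by (auto simp: p_def P1_def P2_def)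
  have pG: "p \<le> (\<integral>\<omega>. indicator (blk.Gset c \<delta> d) (Y 1 \<omega>) \<partial>M)" for d
  proof -
    have [measurable]: "Y 1 \<in> borel_measurable M" using meas by simp
    have "(\<integral>\<omega>. indicator (blk.Gset c \<delta> d) (Y 1 \<omega>) \<partial>M) = (\<integral>\<omega>. indicator (Y 1 -` blk.Gset c \<delta> d) \<omega> \<partial>M)"
      by (simp add: indicator_vimage[symmetric] comp_def)
    also have "\<dots> = measure M {\<omega>\<in>space M. Y 1 \<omega> \<in> blk.Gset c \<delta> d}"
      by (simp add: Int_def conj_commute)
    finally have e: "(\<integral>\<omega>. indicator (blk.Gset c \<delta> d) (Y 1 \<omega>) \<partial>M) = measure M {\<omega>\<in>space M. Y 1 \<omega> \<in> blk.Gset c \<delta> d}" .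
    consider "c d > 0" | "c d < 0" | "c d = 0" by linarith
    then show ?thesis
    proof cases
      case 1 then show ?thesis unfolding e by (simp add: blk.Gset_def p_def P1_def)
    next
      case 2 then show ?thesis unfolding e by (simp add: blk.Gset_def p_def P2_def)
    next
      case 3 then show ?thesis unfolding e using p1 by (simp add: blk.Gset_def prob_space)
    qed
  qed
  define \<sigma>2 where "\<sigma>2 = (\<integral>\<omega>. (Y 1 \<omega>)\<^sup>2 \<partial>M)"
  have s0: "\<sigma>2 \<ge> 0" unfolding \<sigma>2_def by simp
  define \<kappa> where "\<kappa> = \<epsilon> * (1 - exp (- lam/2)) / C"
  have kp: "\<kappa> > 0" using ep Cpos lpos by (simp add: \<kappa>_def)
  define \<eta> where "\<eta> = lam * \<kappa>\<^sup>2 / (8 * exp (lam/2) * (\<sigma>2 + 1))"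
  have etap: "\<eta> > 0" using lpos kp s0 by (simp add: \<eta>_def)
  define m where "m = max (max m0 1) (nat \<lceil>4 / (lam\<^sup>2 * \<eta>)\<rceil> + 1)"
  have m1: "m \<ge> 1" and mm0: "m \<ge> m0" by (auto simp: m_def)
  have mbig: "real m \<ge> 4 / (lam\<^sup>2 * \<eta>)" unfolding m_def by linarith
  define K where "K = \<epsilon> * (1 - exp (- lam/2)) / C * exp (lam * real m / 2)"
  define a where "a = exp (lam/2) / K\<^sup>2"
  have a0: "a \<ge> 0" by (simp add: a_def)
  have as: "a * \<sigma>2 \<le> lam / (8 * real m)"
  proof -
    have mp: "real m > 0" using m1 by simp
    have K2: "K\<^sup>2 = \<kappa>\<^sup>2 * exp (lam * real m)"
      by (simp add: K_def \<kappa>_def power_mult_distrib power2_eq_square exp_add[symmetric])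
    have e1: "(lam * real m)\<^sup>2 / 4 \<le> exp (lam * real m)" using lpos mp by (intro exp_sq_bound) simp
    have "real m / exp (lam * real m) \<le> real m / ((lam * real m)\<^sup>2 / 4)"
      using e1 lpos mp by (intro divide_left_mono) (auto intro!: mult_pos_pos)
    also have "\<dots> = 4 / (lam\<^sup>2 * real m)" using mp by (simp add: power2_eq_square field_simps)
    also have "\<dots> \<le> \<eta>"
      using mbig lpos etap mp by (simp add: field_simps)
    finally have r: "real m / exp (lam * real m) \<le> \<eta>" .
    have "a * \<sigma>2 \<le> a * (\<sigma>2 + 1)" using a0 by (intro mult_left_mono) auto
    also have "\<dots> = exp (lam/2) * (\<sigma>2 + 1) / (\<kappa>\<^sup>2 * exp (lam * real m))"
      by (simp add: a_def K2)
    also have "\<dots> \<le> lam / (8 * real m)"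
    proof -
      have "real m * (exp (lam/2) * (\<sigma>2 + 1)) \<le> \<eta> * exp (lam * real m) * (exp (lam/2) * (\<sigma>2 + 1))"
        using r s0 by (intro mult_right_mono) (auto simp: field_simps)
      also have "\<dots> = exp (lam * real m) * (\<eta> * (exp (lam/2) * (\<sigma>2 + 1)))" by (simp only: mult_ac)
      also have "\<eta> * (exp (lam/2) * (\<sigma>2 + 1)) = lam * \<kappa>\<^sup>2 / 8"
      proof -
        have ne: "\<sigma>2 + 1 \<noteq> 0" using s0 by linarith
        have hh: "\<And>X D::real. D \<noteq> 0 \<Longrightarrow> X / (8 * D) * D = X / 8" by (simp add: field_simps)
        have "\<eta> = lam * \<kappa>\<^sup>2 / (8 * (exp (lam/2) * (\<sigma>2 + 1)))" by (simp add: \<eta>_def mult.assoc)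
        then show ?thesis
          using hh[of "exp (lam/2) * (\<sigma>2 + 1)" "lam * \<kappa>\<^sup>2"] ne by simp
      qed
      also have "exp (lam * real m) * (lam * \<kappa>\<^sup>2 / 8) = lam * \<kappa>\<^sup>2 * exp (lam * real m) / 8" by simp
      finally show ?thesis using kp mp s0 by (simp add: field_simps)
    qed
    finally show ?thesis .
  qed
  interpret B: blkp c m \<delta> \<epsilon> "1 / (1 - p ^ m)" M Y p
  proof unfold_locales
    show "indep_vars (\<lambda>_. borel) Y {1..}" by (rule indep)
    show "1 \<le> m" by (rule m1)
    show "0 < p" by (rule p0)
    show "p < 1" by (rule p1)
    show "1 / (1 - p ^ m) = 1 / (1 - p ^ m)" by (rule refl)
    fix n :: nat assume n: "1 \<le> n"
    show "random_variable borel (Y n)" by (rule meas[OF n])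
    show "distr M borel (Y n) = distr M borel (Y 1)" by (rule ident[OF n])
  next
    fix d show "p \<le> (\<integral>\<omega>. indicator (blk.Gset c \<delta> d) (Y 1 \<omega>) \<partial>M)" by (rule pG)
  qed
  have fb: "persist_prob M (ma_proc c Y) N x \<le> (1 / (1 - p ^ m)) powr (- real (N div m) / 2)
          + exp (- lam / 2 * (real (N div m) / 2)) * (1 + a * \<sigma>2) ^ N" for N
    unfolding a_def K_def \<sigma>2_def by (rule B.final_bound[OF ep Cpos lpos cb bigm[OF mm0] sq])
  have q0: "0 < p ^ m" and q1: "p ^ m < 1" using p0 p1 m1 by (auto simp: power_less_one_iff)
  define c1 where "c1 = min (p ^ m / (2 * real m)) (lam / (8 * real m))"
  have c1p: "c1 > 0" using q0 lpos m1 by (simp add: c1_def)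
  have "\<forall>N. persist_prob M (ma_proc c Y) N x \<le> (exp (p ^ m / 2) + exp (lam/4)) * exp (- c1 * real N)"
  proof
    fix N
    show "persist_prob M (ma_proc c Y) N x \<le> (exp (p ^ m / 2) + exp (lam/4)) * exp (- c1 * real N)"
      using fb[of N] arith_final[OF q0 q1 m1 lpos a0 s0 as, of N] unfolding c1_def by linarith
  qed
  then show ?thesis using c1p by blast
qed

lemma sqrt_le_nat: "sqrt (real N) \<le> real N"
proof (cases "N = 0")
  case False
  then have "real N \<le> (real N)\<^sup>2" by (simp add: power2_eq_square)
  then have "sqrt (real N) \<le> sqrt ((real N)\<^sup>2)" by (rule real_sqrt_le_mono)
  then show ?thesis by simp
qed simp

lemma div_ln_le: "N \<ge> 3 \<Longrightarrow> real N / ln (real N) \<le> real N"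
proof -
  assume N: "N \<ge> 3"
  have "exp 1 \<le> (3::real)" by (rule exp_le)
  also have "\<dots> \<le> real N" using N by simp
  finally have "1 \<le> ln (real N)" using N by (simp add: ln_ge_iff)
  then have "real N * 1 \<le> real N * ln (real N)" by (intro mult_left_mono) auto
  then show ?thesis using \<open>1 \<le> ln (real N)\<close> by (simp add: divide_le_eq)
qed

theorem mainTheorem5:
  fixes M :: "'a measure" and Y :: "nat \<Rightarrow> 'a \<Rightarrow> real"
    and c :: "nat \<Rightarrow> real" and C lam \<delta> :: real
  assumes P: "prob_space M"
    and meas: "\<And>n. n \<ge> 1 \<Longrightarrow> Y n \<in> borel_measurable M"
    and indep: "prob_space.indep_vars M (\<lambda>_. borel) Y {1..}"
    and ident: "\<And>n. n \<ge> 1 \<Longrightarrow> distr M borel (Y n) = distr M borel (Y 1)"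
    and c0: "c 0 = 1"
    and csum: "summable (\<lambda>k. \<bar>c k\<bar>)"
    and Cpos: "C > 0" and lpos: "lam > 0"
    and tail: "\<And>q. q \<ge> 1 \<Longrightarrow> (\<Sum>k. \<bar>c (k + q)\<bar>) \<le> C * exp (- lam * real q)"
    and sq: "integrable M (\<lambda>\<omega>. (Y 1 \<omega>)\<^sup>2)"
    and dpos: "\<delta> > 0"
    and neg: "measure M {\<omega> \<in> space M. Y 1 \<omega> < - \<delta>} > 0"
    and posi: "measure M {\<omega> \<in> space M. Y 1 \<omega> > \<delta>} > 0"
  shows "(\<forall>x. 0 \<le> x \<and> x < \<delta> * (\<Sum>k. \<bar>c k\<bar>) \<longrightarrow>
            (\<exists>cx > 0. (\<lambda>N. persist_prob M (ma_proc c Y) N x)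
                         \<in> O(\<lambda>N. exp (- cx * sqrt (real N)))))
       \<and> ((\<exists>\<alpha> > 0. integrable M (\<lambda>\<omega>. exp (\<bar>Y 1 \<omega>\<bar> powr \<alpha>))) \<longrightarrow>
          (\<forall>x. 0 \<le> x \<and> x < \<delta> * (\<Sum>k. \<bar>c k\<bar>) \<longrightarrow>
            (\<exists>cx > 0. (\<lambda>N. persist_prob M (ma_proc c Y) N x)
                         \<in> O(\<lambda>N. exp (- cx * real N / ln (real N))))))"
proof -
  have key: "\<exists>c1>0. \<exists>K0\<ge>0. \<forall>N. 0 \<le> persist_prob M (ma_proc c Y) N x \<and>
               persist_prob M (ma_proc c Y) N x \<le> K0 * exp (- c1 * real N)"
    if x: "0 \<le> x \<and> x < \<delta> * (\<Sum>k. \<bar>c k\<bar>)" for x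
  proof -
    obtain c1 K0 where c1: "c1 > 0" and b: "\<And>N. persist_prob M (ma_proc c Y) N x \<le> K0 * exp (- c1 * real N)"
      using main_exp[OF P meas indep ident csum Cpos lpos tail sq dpos neg posi] x by blast
    have nn: "0 \<le> persist_prob M (ma_proc c Y) N x" for N by (simp add: persist_prob_def)
    have "0 \<le> K0 * exp (- c1 * real 0)" using b[of 0] nn[of 0] by linarith
    then have "K0 \<ge> 0" by simp
    then show ?thesis using c1 b nn by blast
  qed
  show ?thesis
  proof (intro conjI allI impI)
    fix x assume x: "0 \<le> x \<and> x < \<delta> * (\<Sum>k. \<bar>c k\<bar>)"
    obtain c1 K0 where c1: "c1 > 0" "K0 \<ge> 0" and b: "\<And>N. 0 \<le> persist_prob M (ma_proc c Y) N x \<and>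
               persist_prob M (ma_proc c Y) N x \<le> K0 * exp (- c1 * real N)"
      using key[OF x] by blast
    show "\<exists>cx > 0. (\<lambda>N. persist_prob M (ma_proc c Y) N x) \<in> O(\<lambda>N. exp (- cx * sqrt (real N)))"
    proof (intro exI[of _ c1] conjI c1 bigoI[where c=K0])
      show "\<forall>\<^sub>F N in at_top. norm (persist_prob M (ma_proc c Y) N x) \<le> K0 * norm (exp (- c1 * sqrt (real N)))"
      proof (intro always_eventually allI)
        fix N :: nat
        have "exp (- c1 * real N) \<le> exp (- c1 * sqrt (real N))"
          using sqrt_le_nat[of N] c1 by simp
        then have "K0 * exp (- c1 * real N) \<le> K0 * exp (- c1 * sqrt (real N))"
          using c1 by (intro mult_left_mono) auto
        then show "norm (persist_prob M (ma_proc c Y) N x) \<le> K0 * norm (exp (- c1 * sqrt (real N)))"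
          using b[of N] by simp
      qed
    qed
  next
    fix x assume x: "0 \<le> x \<and> x < \<delta> * (\<Sum>k. \<bar>c k\<bar>)"
    obtain c1 K0 where c1: "c1 > 0" "K0 \<ge> 0" and b: "\<And>N. 0 \<le> persist_prob M (ma_proc c Y) N x \<and>
               persist_prob M (ma_proc c Y) N x \<le> K0 * exp (- c1 * real N)"
      using key[OF x] by blast
    show "\<exists>cx > 0. (\<lambda>N. persist_prob M (ma_proc c Y) N x) \<in> O(\<lambda>N. exp (- cx * real N / ln (real N)))"
    proof (intro exI[of _ c1] conjI c1 bigoI[where c=K0])
      show "\<forall>\<^sub>F N in at_top. norm (persist_prob M (ma_proc c Y) N x) \<le> K0 * norm (exp (- c1 * real N / ln (real N)))"
        using eventually_ge_at_top[of "3::nat"]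
      proof eventually_elim
        fix N :: nat assume N: "N \<ge> 3"
        have "c1 * (real N / ln (real N)) \<le> c1 * real N" using div_ln_le[OF N] c1 by (intro mult_left_mono) auto
        then have "exp (- c1 * real N) \<le> exp (- c1 * real N / ln (real N))" by simp
        then have "K0 * exp (- c1 * real N) \<le> K0 * exp (- c1 * real N / ln (real N))"
          using c1 by (intro mult_left_mono) auto
        then show "norm (persist_prob M (ma_proc c Y) N x) \<le> K0 * norm (exp (- c1 * real N / ln (real N)))"
          using b[of N] by simp
      qed
    qed
  qed
qed

end
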